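(* Let $(\mathcal{X},\mathcal{Y},W)$ be a discrete memoryless channel with finite alphabets and $|\mathcal{X}|\le3$. Then the channel is non-redundant if and only if for all $p,q\in\mathcal{P}(\mathcal{X})$, $W\circ p=W\circ q$ implies $p=q$.
   Context: $\mathcal{P}(\mathcal{X})$ is the set of probability distributions on $\mathcal{X}$; $W_x=W(\cdot|x)$ and $(W\circ p)(y)=\sum_{x}p(x)W(y|x)$. The channel is non-redundant if there exists $\eta>0$ such that for all $x\in\mathcal{X}$ and all $p\in\mathcal{P}(\mathcal{X})$ with $p(x)=0$, $\|W_x-W\circ p\|_1\ge\eta$. *)

theory Defs
  imports Complex_Main "HOL-Library.Cardinality"
begin

definition prob_dist :: "('a::finite \<Rightarrow> real) \<Rightarrow> bool" where
  "prob_dist p \<longleftrightarrow> (\<forall>a. 0 \<le> p a) \<and> (\<Sum>a\<in>UNIV. p a) = 1"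

text \<open>A DMC: W x is the output distribution W(.|x) for each input x.\<close>
definition channel :: "('x::finite \<Rightarrow> 'y::finite \<Rightarrow> real) \<Rightarrow> bool" where
  "channel W \<longleftrightarrow> (\<forall>x. prob_dist (W x))"

definition chan_out :: "('x::finite \<Rightarrow> 'y \<Rightarrow> real) \<Rightarrow> ('x \<Rightarrow> real) \<Rightarrow> 'y \<Rightarrow> real" where
  "chan_out W p = (\<lambda>y. \<Sum>x\<in>UNIV. p x * W x y)"

definition l1_dist :: "('y::finite \<Rightarrow> real) \<Rightarrow> ('y \<Rightarrow> real) \<Rightarrow> real" where
  "l1_dist f g = (\<Sum>y\<in>UNIV. \<bar>f y - g y\<bar>)"

definition non_redundant :: "('x::finite \<Rightarrow> 'y::finite \<Rightarrow> real) \<Rightarrow> bool" where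
  "non_redundant W \<longleftrightarrow> (\<exists>\<eta>>0. \<forall>x p. prob_dist p \<and> p x = 0 \<longrightarrow> \<eta> \<le> l1_dist (W x) (chan_out W p))"

end

theory Submission
  imports Defs "HOL-Analysis.Analysis"
begin

lemma chan_out_sum:
  "chan_out W p y = (\<Sum>a\<in>UNIV. p a * W a y)" by (simp add: chan_out_def)

lemma redundant_point:
  fixes W :: "'x::finite \<Rightarrow> 'y::finite \<Rightarrow> real"
  assumes pp: "prob_dist p" and pq: "prob_dist q" and eq: "chan_out W p = chan_out W q"
    and P: "{a. p a > q a} = {x}"
  shows "\<exists>r. prob_dist r \<and> r x = 0 \<and> W x = chan_out W r"
proof -
  define c where "c = p x - q x"
  have c: "c > 0" using P unfolding c_def by auto
  have le: "a \<noteq> x \<Longrightarrow> p a \<le> q a" for a using P by (metis (mono_tags) mem_Collect_eq not_le singletonD)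
  define r where "r a = (if a = x then 0 else (q a - p a) / c)" for a
  have s0: "(\<Sum>a\<in>UNIV. q a - p a) = 0" using pp pq
    by (simp add: prob_dist_def sum_subtractf)
  have split: "(\<Sum>a\<in>UNIV. f a) = f x + (\<Sum>a\<in>UNIV-{x}. f a)" for f :: "'x \<Rightarrow> real"
    by (simp add: sum.remove)
  have sr: "(\<Sum>a\<in>UNIV. r a) = (\<Sum>a\<in>UNIV-{x}. (q a - p a)) / c"
    by (simp add: split r_def sum_divide_distrib)
  also have "(\<Sum>a\<in>UNIV-{x}. (q a - p a)) = c"
    using s0 split[of "\<lambda>a. q a - p a"] c_def by simp
  finally have "(\<Sum>a\<in>UNIV. r a) = 1" using c by simp
  moreover have "\<forall>a. 0 \<le> r a" using le c by (simp add: r_def)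
  ultimately have pr: "prob_dist r" by (simp add: prob_dist_def)
  have "W x = chan_out W r"
  proof
    fix y
    have e0: "(\<Sum>a\<in>UNIV. (q a - p a) * W a y) = 0"
      using fun_cong[OF eq, of y] by (simp add: chan_out_sum left_diff_distrib sum_subtractf)
    have "chan_out W r y = (\<Sum>a\<in>UNIV-{x}. (q a - p a) * W a y) / c"
      by (simp add: chan_out_sum split r_def sum_divide_distrib)
    also have "(\<Sum>a\<in>UNIV-{x}. (q a - p a) * W a y) = c * W x y"
    proof -
      have "(q x - p x) * W x y = - (c * W x y)" by (simp add: c_def algebra_simps)
      thus ?thesis using e0 split[of "\<lambda>a. (q a - p a) * W a y"] by linarith
    qed
    finally show "W x y = chan_out W r y" using c by simp
  qed
  thus ?thesis using pr by (auto simp: r_def)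
qed

lemma inj_to_nr_point:
  fixes W :: "'x::finite \<Rightarrow> 'y::finite \<Rightarrow> real" and x :: 'x
  assumes inj: "\<forall>p q. prob_dist p \<and> prob_dist q \<and> chan_out W p = chan_out W q \<longrightarrow> p = q"
  shows "\<exists>\<eta>>0. \<forall>p. prob_dist p \<and> p x = 0 \<longrightarrow> \<eta> \<le> l1_dist (W x) (chan_out W p)"
proof -
  define S where "S = {v :: real^'x. (\<forall>i. 0 \<le> v$i) \<and> (\<Sum>i\<in>UNIV. v$i) = 1 \<and> v$x = 0}"
  define g where "g v = (\<Sum>y\<in>UNIV. \<bar>W x y - (\<Sum>a\<in>UNIV. v$a * W a y)\<bar>)" for v :: "real^'x"
  have cl: "closed S" unfolding S_def
    by (intro closed_Collect_conj closed_Collect_all closed_Collect_le closed_Collect_eq continuous_intros)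
  have bd: "bounded S"
  proof -
    have "norm v \<le> 1" if "v \<in> S" for v
    proof -
      have "norm v \<le> (\<Sum>i\<in>UNIV. \<bar>v$i\<bar>)" by (rule norm_le_l1_cart)
      also have "\<dots> = (\<Sum>i\<in>UNIV. v$i)" using that by (simp add: S_def)
      finally show ?thesis using that by (simp add: S_def)
    qed
    thus ?thesis by (meson bounded_iff)
  qed
  have cg: "continuous_on S g" unfolding g_def by (intro continuous_intros)
  show ?thesis
  proof (cases "S = {}")
    case True
    show ?thesis
    proof (intro exI[of _ 1] conjI allI impI)
      fix p assume h: "prob_dist p \<and> p x = 0"
      have "vec_lambda p \<in> S" using h by (simp add: S_def prob_dist_def)
      thus "1 \<le> l1_dist (W x) (chan_out W p)" using True by simp
    qed simp
  next
    case False
    obtain v0 where v0: "v0 \<in> S" and mn: "\<And>v. v \<in> S \<Longrightarrow> g v0 \<le> g v"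
      using continuous_attains_inf[OF compact_eq_bounded_closed[THEN iffD2, OF conjI[OF bd cl]] False cg]
      by blast
    have pos: "g v0 > 0"
    proof (rule ccontr)
      assume "\<not> g v0 > 0"
      moreover have "g v0 \<ge> 0" unfolding g_def by (intro sum_nonneg) simp
      ultimately have "g v0 = 0" by simp
      hence z: "\<forall>y. \<bar>W x y - (\<Sum>a\<in>UNIV. v0$a * W a y)\<bar> = 0"
        unfolding g_def by (subst (asm) sum_nonneg_eq_0_iff) auto
      define p0 where "p0 = vec_nth v0"
      define dx where "dx a = (if a = x then 1 else 0::real)" for a
      have "chan_out W dx = W x" by (rule ext) (simp add: chan_out_sum dx_def mult_delta_left)
      moreover have "chan_out W p0 = W x" using z by (intro ext) (simp add: chan_out_sum p0_def)
      moreover have "prob_dist dx" by (simp add: prob_dist_def dx_def)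
      moreover have "prob_dist p0" using v0 by (simp add: prob_dist_def p0_def S_def)
      ultimately have "dx = p0" using inj by metis
      hence "dx x = p0 x" by simp
      thus False using v0 by (simp add: dx_def p0_def S_def)
    qed
    show ?thesis
    proof (intro exI[of _ "g v0"] conjI allI impI pos)
      fix p assume h: "prob_dist p \<and> p x = 0"
      have "vec_lambda p \<in> S" using h by (simp add: S_def prob_dist_def)
      from mn[OF this] show "g v0 \<le> l1_dist (W x) (chan_out W p)"
        by (simp add: g_def l1_dist_def chan_out_sum)
    qed
  qed
qed

theorem proposition2:
  fixes W :: "'x::finite \<Rightarrow> 'y::finite \<Rightarrow> real"
  assumes "channel W" and "CARD('x) \<le> 3"
  shows "non_redundant W \<longleftrightarrow>
    (\<forall>p q. prob_dist p \<and> prob_dist q \<and> chan_out W p = chan_out W q \<longrightarrow> p = q)"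
proof
  assume inj: "\<forall>p q. prob_dist p \<and> prob_dist q \<and> chan_out W p = chan_out W q \<longrightarrow> p = q"
  obtain e where e: "\<And>x. e x > 0 \<and> (\<forall>p. prob_dist p \<and> p x = 0 \<longrightarrow> e x \<le> l1_dist (W x) (chan_out W p))"
    using inj_to_nr_point[OF inj] by metis
  define \<eta> where "\<eta> = Min (range e)"
  have "\<eta> > 0" unfolding \<eta>_def using e by (subst Min_gr_iff) auto
  moreover have "\<eta> \<le> e x" for x unfolding \<eta>_def by simp
  ultimately show "non_redundant W" unfolding non_redundant_def using e by (meson order_trans)
next
  assume nr: "non_redundant W"
  then obtain \<eta> where eta: "\<eta> > 0" and H: "\<And>x p. prob_dist p \<Longrightarrow> p x = 0 \<Longrightarrow> \<eta> \<le> l1_dist (W x) (chan_out W p)"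
    unfolding non_redundant_def by blast
  have noeq: False if "prob_dist r" "r x = 0" "W x = chan_out W r" for r x
    using H[OF that(1,2)] that(3) eta by (simp add: l1_dist_def)
  show "\<forall>p q. prob_dist p \<and> prob_dist q \<and> chan_out W p = chan_out W q \<longrightarrow> p = q"
  proof (intro allI impI, rule ccontr)
    fix p q assume h: "prob_dist p \<and> prob_dist q \<and> chan_out W p = chan_out W q" and ne: "p \<noteq> q"
    define P where "P = {a. p a > q a}"
    define N where "N = {a. q a > p a}"
    have s0: "(\<Sum>a\<in>UNIV. q a - p a) = 0" using h by (simp add: prob_dist_def sum_subtractf)
    have "P \<noteq> {}"
    proof
      assume "P = {}"
      hence "\<forall>a\<in>UNIV. 0 \<le> q a - p a" by (auto simp: P_def not_less)
      hence "\<forall>a. q a - p a = 0" using s0 sum_nonneg_eq_0_iff[of UNIV "\<lambda>a. q a - p a"] by simp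
      thus False using ne by auto
    qed
    moreover have "N \<noteq> {}"
    proof
      assume "N = {}"
      hence "\<forall>a\<in>UNIV. 0 \<le> p a - q a" by (auto simp: N_def not_less)
      moreover have "(\<Sum>a\<in>UNIV. p a - q a) = 0" using h by (simp add: prob_dist_def sum_subtractf)
      ultimately have "\<forall>a. p a - q a = 0" using sum_nonneg_eq_0_iff[of UNIV "\<lambda>a. p a - q a"] by simp
      thus False using ne by auto
    qed
    moreover have "card P + card N \<le> 3"
    proof -
      have "card P + card N = card (P \<union> N)"
        by (rule card_Un_disjoint[symmetric]) (auto simp: P_def N_def)
      also have "\<dots> \<le> CARD('x)" by (rule card_mono) auto
      finally show ?thesis using assms(2) by simp
    qed
    ultimately have "card P = 1 \<or> card N = 1"
    proof -
      have "card P \<noteq> 0" "card N \<noteq> 0" using \<open>P \<noteq> {}\<close> \<open>N \<noteq> {}\<close> by auto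
      thus ?thesis using \<open>card P + card N \<le> 3\<close> by linarith
    qed
    thus False
    proof
      assume "card P = 1"
      then obtain x where "P = {x}" by (rule card_1_singletonE)
      then obtain r where "prob_dist r" "r x = 0" "W x = chan_out W r"
        using redundant_point[of p q W x] h P_def by auto
      thus False by (rule noeq)
    next
      assume "card N = 1"
      then obtain x where "N = {x}" by (rule card_1_singletonE)
      then obtain r where "prob_dist r" "r x = 0" "W x = chan_out W r"
        using redundant_point[of q p W x] h N_def by auto
      thus False by (rule noeq)
    qed
  qed
qed

end
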